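(* Let $J$ be an ideal of $\mathcal{O}_n$ of finite colength and let $L=\{j,\dots,n\}$ for some $j\in\{1,\dots,n\}$. Then $\operatorname{in}(J_L)=\operatorname{in}(J)_L$.
   Context: $\mathcal{O}_n$ is the ring of germs of analytic functions $(\mathbb{C}^n,0)\to\mathbb{C}$ in coordinates $x_1,\dots,x_n$. For $L\subseteq\{1,\dots,n\}$ nonempty, $\mathcal{O}_{n,L}$ is the subring of germs depending only on the variables $x_i$, $i\in L$. For $f=\sum_k a_kx^k\in\mathcal{O}_n$, $f_L$ is the sum of the terms $a_kx^k$ with $k_i=0$ for all $i\notin L$; for an ideal $J$ of $\mathcal{O}_n$, $J_L$ is the ideal of $\mathcal{O}_{n,L}$ generated by all $f_L$, $f\in J$. Monomials are ordered by the negative lexicographical order: $x^\alpha>x^\beta$ iff there is $i$ with $(\alpha_1,\dots,\alpha_{i-1})=(\beta_1,\dots,\beta_{i-1})$ and $\alpha_i<\beta_i$ (in $\mathcal{O}_{n,L}$ one uses the restriction of this order to monomials in the variables $x_i$, $i\in L$). For $f\neq0$, $\operatorname{in}(f)$ is the largest monomial in the support of $f$, and the initial ideal $\operatorname{in}(K)$ of an ideal $K$ is the ideal generated by all $\operatorname{in}(f)$, $f\in K$ (computed in $\mathcal{O}_{n,L}$ for $K=J_L$). *)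

theory Defs
  imports "HOL-Analysis.Analysis"
begin

text \<open>Germs of analytic functions at 0 are identified with convergent power series.
  An exponent vector is a function nat => nat (variables indexed 1..n);
  a power series is a coefficient function on exponent vectors.\<close>

type_synonym mon = "nat \<Rightarrow> nat"
type_synonym series = "mon \<Rightarrow> complex"

definition supp_in :: "nat set \<Rightarrow> mon \<Rightarrow> bool" where
  "supp_in L \<alpha> \<longleftrightarrow> (\<forall>i. i \<notin> L \<longrightarrow> \<alpha> i = 0)"

definition mdeg :: "nat set \<Rightarrow> mon \<Rightarrow> nat" where
  "mdeg L \<alpha> = (\<Sum>i\<in>L. \<alpha> i)"

definition conv_series :: "nat set \<Rightarrow> series set" where
  "conv_series L = {f. (\<forall>\<alpha>. f \<alpha> \<noteq> 0 \<longrightarrow> supp_in L \<alpha>) \<and>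
      (\<exists>r::real. r > 0 \<and> (\<lambda>\<alpha>. norm (f \<alpha>) * r ^ mdeg L \<alpha>) summable_on {\<alpha>. supp_in L \<alpha>})}"

definition szero :: series where "szero = (\<lambda>_. 0)"

definition sadd :: "series \<Rightarrow> series \<Rightarrow> series" where
  "sadd f g = (\<lambda>\<alpha>. f \<alpha> + g \<alpha>)"

definition ssmult :: "complex \<Rightarrow> series \<Rightarrow> series" where
  "ssmult c f = (\<lambda>\<alpha>. c * f \<alpha>)"

definition smult :: "series \<Rightarrow> series \<Rightarrow> series" where
  "smult f g = (\<lambda>\<alpha>. \<Sum>\<beta>\<in>{\<beta>. \<forall>i. \<beta> i \<le> \<alpha> i}. f \<beta> * g (\<lambda>i. \<alpha> i - \<beta> i))"

definition smonom :: "mon \<Rightarrow> series" where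
  "smonom \<alpha> = (\<lambda>\<beta>. if \<beta> = \<alpha> then 1 else 0)"

definition is_ideal :: "nat set \<Rightarrow> series set \<Rightarrow> bool" where
  "is_ideal L J \<longleftrightarrow> J \<subseteq> conv_series L \<and> szero \<in> J \<and>
     (\<forall>f\<in>J. \<forall>g\<in>J. sadd f g \<in> J) \<and> (\<forall>h\<in>conv_series L. \<forall>f\<in>J. smult h f \<in> J)"

definition ideal_gen :: "nat set \<Rightarrow> series set \<Rightarrow> series set" where
  "ideal_gen L S = \<Inter>{I. is_ideal L I \<and> S \<subseteq> I}"

definition trunc :: "nat set \<Rightarrow> series \<Rightarrow> series" where
  "trunc L f = (\<lambda>\<alpha>. if supp_in L \<alpha> then f \<alpha> else 0)"

definition restr_ideal :: "nat set \<Rightarrow> series set \<Rightarrow> series set" where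
  "restr_ideal L J = ideal_gen L (trunc L ` J)"

definition neglex_greater :: "mon \<Rightarrow> mon \<Rightarrow> bool" where
  "neglex_greater \<alpha> \<beta> \<longleftrightarrow> (\<exists>i. (\<forall>k<i. \<alpha> k = \<beta> k) \<and> \<alpha> i < \<beta> i)"

definition init_exp :: "series \<Rightarrow> mon" where
  "init_exp f = (THE \<alpha>. f \<alpha> \<noteq> 0 \<and> (\<forall>\<beta>. f \<beta> \<noteq> 0 \<longrightarrow> \<beta> = \<alpha> \<or> neglex_greater \<alpha> \<beta>))"

definition init_ideal :: "nat set \<Rightarrow> series set \<Rightarrow> series set" where
  "init_ideal L K = ideal_gen L {smonom (init_exp f) | f. f \<in> K \<and> f \<noteq> szero}"

text \<open>Finite colength: O_n / J is a finite-dimensional C-vector space.\<close>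
definition finite_colength :: "nat \<Rightarrow> series set \<Rightarrow> bool" where
  "finite_colength n J \<longleftrightarrow> (\<exists>G. finite G \<and> G \<subseteq> conv_series {1..n} \<and>
     (\<forall>f\<in>conv_series {1..n}. \<exists>c. sadd f (ssmult (-1) (\<lambda>\<alpha>. \<Sum>g\<in>G. c g * g \<alpha>)) \<in> J))"

end

theory Submission
  imports Defs
begin

lemma finite_below:
  assumes "finite L" "supp_in L \<alpha>"
  shows "finite {\<beta>::mon. \<forall>i. \<beta> i \<le> \<alpha> i}"
proof -
  let ?D = "{\<beta>::mon. \<forall>i. \<beta> i \<le> \<alpha> i}"
  have "inj_on (\<lambda>\<beta>. restrict \<beta> L) ?D"
  proof (rule inj_onI)
    fix x y assume x: "x \<in> ?D" and y: "y \<in> ?D" and e: "restrict x L = restrict y L"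
    show "x = y"
    proof
      fix i show "x i = y i"
      proof (cases "i \<in> L")
        case True then show ?thesis using e by (metis restrict_apply')
      next
        case False then have "\<alpha> i = 0" using assms(2) by (simp add: supp_in_def)
        then show ?thesis using x y by (metis le_zero_eq mem_Collect_eq)
      qed
    qed
  qed
  moreover have "(\<lambda>\<beta>. restrict \<beta> L) ` ?D \<subseteq> PiE L (\<lambda>i. {..\<alpha> i})" by auto
  moreover have "finite (PiE L (\<lambda>i. {..\<alpha> i}))" using assms(1) by (simp add: finite_PiE)
  ultimately show ?thesis by (meson finite_imageD finite_subset)
qed

lemma supp_le:
  assumes "supp_in L \<alpha>" "\<forall>i. \<beta> i \<le> \<alpha> i"
  shows "supp_in L \<beta>" "supp_in L (\<lambda>i. \<alpha> i - \<beta> i)"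
  using assms unfolding supp_in_def by (metis le_zero_eq, simp)

lemma mdeg_split:
  assumes "\<forall>i. \<beta> i \<le> \<alpha> i"
  shows "mdeg L \<alpha> = mdeg L \<beta> + mdeg L (\<lambda>i. \<alpha> i - \<beta> i)"
  unfolding mdeg_def sum.distrib[symmetric] using assms by (intro sum.cong) auto

lemma conv_zero_outside:
  "f \<in> conv_series L \<Longrightarrow> \<not> supp_in L \<alpha> \<Longrightarrow> f \<alpha> = 0"
  unfolding conv_series_def by blast

lemma conv_radius_mono:
  assumes "(\<lambda>\<alpha>. norm (f \<alpha>) * r ^ mdeg L \<alpha>) summable_on A" "0 < s" "s \<le> r"
  shows "(\<lambda>\<alpha>. norm (f \<alpha>) * s ^ mdeg L \<alpha>) summable_on A"
  apply (rule summable_on_comparison_test[OF assms(1)])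
  using assms(2,3) by (auto intro!: mult_left_mono power_mono)

lemma smult_outside:
  assumes "f \<in> conv_series L" "g \<in> conv_series L" "\<not> supp_in L \<alpha>"
  shows "smult f g \<alpha> = 0"
proof -
  have "f \<beta> * g (\<lambda>i. \<alpha> i - \<beta> i) = 0" if "\<forall>i. \<beta> i \<le> \<alpha> i" for \<beta>
  proof (rule ccontr)
    assume "f \<beta> * g (\<lambda>i. \<alpha> i - \<beta> i) \<noteq> 0"
    then have "supp_in L \<beta>" "supp_in L (\<lambda>i. \<alpha> i - \<beta> i)"
      using assms conv_zero_outside by (metis mult_eq_0_iff)+
    then have "supp_in L \<alpha>" using that unfolding supp_in_def
      by (metis add_diff_inverse_nat add_is_0 not_le)
    then show False using assms(3) by simp
  qed
  then show ?thesis unfolding smult_def by (simp add: sum.neutral)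
qed

lemma smult_conv:
  assumes L: "finite L" and f: "f \<in> conv_series L" and g: "g \<in> conv_series L"
  shows "smult f g \<in> conv_series L"
proof -
  let ?P = "{\<alpha>. supp_in L \<alpha>}"
  let ?D = "\<lambda>\<alpha>::mon. {\<beta>::mon. \<forall>i. \<beta> i \<le> \<alpha> i}"
  obtain rf where rf: "rf > 0" "(\<lambda>\<alpha>. norm (f \<alpha>) * rf ^ mdeg L \<alpha>) summable_on ?P"
    using f unfolding conv_series_def by blast
  obtain rg where rg: "rg > 0" "(\<lambda>\<alpha>. norm (g \<alpha>) * rg ^ mdeg L \<alpha>) summable_on ?P"
    using g unfolding conv_series_def by blast
  define r where "r = min rf rg"
  have r: "r > 0" "r \<le> rf" "r \<le> rg" using rf rg by (auto simp: r_def)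
  define a where "a = (\<lambda>\<alpha>. norm (f \<alpha>) * r ^ mdeg L \<alpha>)"
  define b where "b = (\<lambda>\<alpha>. norm (g \<alpha>) * r ^ mdeg L \<alpha>)"
  have sa: "a summable_on ?P" unfolding a_def using conv_radius_mono[OF rf(2) r(1,2)] .
  have sb: "b summable_on ?P" unfolding b_def using conv_radius_mono[OF rg(2) r(1,3)] .
  have a0: "\<And>x. a x \<ge> 0" and b0: "\<And>x. b x \<ge> 0" using r by (auto simp: a_def b_def)
  define u where "u = (\<lambda>\<alpha>. \<Sum>\<beta>\<in>?D \<alpha>. a \<beta> * b (\<lambda>i. \<alpha> i - \<beta> i))"
  have su: "u summable_on ?P"
  proof (rule nonneg_bdd_above_summable_on)
    show "\<And>x. x \<in> ?P \<Longrightarrow> u x \<ge> 0" unfolding u_def using a0 b0 by (simp add: sum_nonneg)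
    show "bdd_above (sum u ` {F. F \<subseteq> ?P \<and> finite F})"
    proof (rule bdd_aboveI2)
      fix F assume F: "F \<in> {F. F \<subseteq> ?P \<and> finite F}"
      then have Fs: "F \<subseteq> ?P" "finite F" by auto
      have fD: "\<And>\<alpha>. \<alpha> \<in> F \<Longrightarrow> finite (?D \<alpha>)" using Fs L finite_below by blast
      define h where "h = (\<lambda>(\<alpha>::mon, \<beta>::mon). (\<beta>, (\<lambda>i. \<alpha> i - \<beta> i)))"
      define S where "S = Sigma F ?D"
      have fS: "finite S" unfolding S_def using Fs fD by auto
      have inj: "inj_on h S"
      proof (rule inj_onI)
        fix x y assume "x \<in> S" "y \<in> S" "h x = h y"
        then show "x = y" unfolding S_def h_def
          apply (cases x; cases y; auto)
          by (rule ext, metis le_add_diff_inverse)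
      qed
      define A where "A = fst ` h ` S"
      define B where "B = snd ` h ` S"
      have AP: "A \<subseteq> ?P" and BP: "B \<subseteq> ?P"
        unfolding A_def B_def S_def h_def using Fs supp_le by fastforce+
      have fA: "finite A" "finite B" unfolding A_def B_def using fS by auto
      have "sum u F = (\<Sum>(\<alpha>,\<beta>)\<in>S. a \<beta> * b (\<lambda>i. \<alpha> i - \<beta> i))"
        unfolding u_def S_def using sum.Sigma[OF Fs(2), of ?D] fD by auto
      also have "\<dots> = (\<Sum>p\<in>h ` S. a (fst p) * b (snd p))"
        using sum.reindex[OF inj, of "\<lambda>p. a (fst p) * b (snd p)"]
        by (simp add: h_def case_prod_beta)
      also have "\<dots> \<le> (\<Sum>p\<in>A \<times> B. a (fst p) * b (snd p))"
        apply (rule sum_mono2) using fA a0 b0 apply (auto simp: A_def B_def)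
        by (metis fst_conv snd_conv image_eqI)+
      also have "\<dots> = sum a A * sum b B"
        by (simp add: sum_product sum.cartesian_product case_prod_beta)
      also have "\<dots> \<le> infsum a ?P * infsum b ?P"
        apply (rule mult_mono)
        using finite_sum_le_infsum[OF sa fA(1) AP] finite_sum_le_infsum[OF sb fA(2) BP] a0 b0
        by (auto intro: sum_nonneg infsum_nonneg)
      finally show "sum u F \<le> infsum a ?P * infsum b ?P" .
    qed
  qed
  have "(\<lambda>\<alpha>. norm (smult f g \<alpha>) * r ^ mdeg L \<alpha>) summable_on ?P"
  proof (rule summable_on_comparison_test[OF su])
    fix \<alpha> assume "\<alpha> \<in> ?P"
    have "norm (smult f g \<alpha>) * r ^ mdeg L \<alpha> \<le>
       (\<Sum>\<beta>\<in>?D \<alpha>. norm (f \<beta> * g (\<lambda>i. \<alpha> i - \<beta> i))) * r ^ mdeg L \<alpha>"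
      unfolding smult_def using r by (intro mult_right_mono norm_sum) auto
    also have "\<dots> = u \<alpha>"
      unfolding u_def sum_distrib_right a_def b_def
    proof (rule sum.cong)
      fix \<beta> assume "\<beta> \<in> ?D \<alpha>"
      then have "mdeg L \<alpha> = mdeg L \<beta> + mdeg L (\<lambda>i. \<alpha> i - \<beta> i)" using mdeg_split by blast
      then show "norm (f \<beta> * g (\<lambda>i. \<alpha> i - \<beta> i)) * r ^ mdeg L \<alpha> =
        norm (f \<beta>) * r ^ mdeg L \<beta> * (norm (g (\<lambda>i. \<alpha> i - \<beta> i)) * r ^ mdeg L (\<lambda>i. \<alpha> i - \<beta> i))"
        by (simp add: norm_mult power_add)
    qed simp
    finally show "norm (smult f g \<alpha>) * r ^ mdeg L \<alpha> \<le> u \<alpha>" .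
  qed (use r in simp)
  moreover have "\<forall>\<alpha>. smult f g \<alpha> \<noteq> 0 \<longrightarrow> supp_in L \<alpha>" using smult_outside f g by blast
  ultimately show ?thesis unfolding conv_series_def using r(1) by blast
qed


lemma sadd_conv:
  assumes f: "f \<in> conv_series L" and g: "g \<in> conv_series L"
  shows "sadd f g \<in> conv_series L"
proof -
  let ?P = "{\<alpha>. supp_in L \<alpha>}"
  obtain rf where rf: "rf > 0" "(\<lambda>\<alpha>. norm (f \<alpha>) * rf ^ mdeg L \<alpha>) summable_on ?P"
    using f unfolding conv_series_def by blast
  obtain rg where rg: "rg > 0" "(\<lambda>\<alpha>. norm (g \<alpha>) * rg ^ mdeg L \<alpha>) summable_on ?P"
    using g unfolding conv_series_def by blast
  define r where "r = min rf rg"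
  have r: "r > 0" "r \<le> rf" "r \<le> rg" using rf rg by (auto simp: r_def)
  have "(\<lambda>\<alpha>. norm (f \<alpha>) * r ^ mdeg L \<alpha> + norm (g \<alpha>) * r ^ mdeg L \<alpha>) summable_on ?P"
    by (rule summable_on_add[OF conv_radius_mono[OF rf(2) r(1,2)] conv_radius_mono[OF rg(2) r(1,3)]])
  then have "(\<lambda>\<alpha>. norm (sadd f g \<alpha>) * r ^ mdeg L \<alpha>) summable_on ?P"
    apply (rule summable_on_comparison_test)
    using r by (auto simp: sadd_def distrib_right[symmetric] intro!: mult_right_mono norm_triangle_ineq)
  moreover have "\<forall>\<alpha>. sadd f g \<alpha> \<noteq> 0 \<longrightarrow> supp_in L \<alpha>"
    unfolding sadd_def using conv_zero_outside[OF f] conv_zero_outside[OF g] by fastforce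
  ultimately show ?thesis unfolding conv_series_def using r(1) by blast
qed

lemma szero_conv: "szero \<in> conv_series L"
  unfolding conv_series_def szero_def by (auto intro!: exI[of _ 1])

lemma smonom_conv: "supp_in L \<alpha> \<Longrightarrow> smonom \<alpha> \<in> conv_series L"
  unfolding conv_series_def smonom_def
  by (auto intro!: exI[of _ 1] finite_nonzero_values_imp_summable_on simp: if_distrib cong: if_cong)

lemma conv_ideal: "finite L \<Longrightarrow> is_ideal L (conv_series L)"
  unfolding is_ideal_def using szero_conv sadd_conv smult_conv by blast

lemma ideal_gen_sub: "S \<subseteq> ideal_gen L S"
  unfolding ideal_gen_def by blast

lemma ideal_gen_least: "is_ideal L I \<Longrightarrow> S \<subseteq> I \<Longrightarrow> ideal_gen L S \<subseteq> I"
  unfolding ideal_gen_def by blast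

lemma ideal_gen_mono': "X \<subseteq> ideal_gen L Y \<Longrightarrow> ideal_gen L X \<subseteq> ideal_gen L Y"
  unfolding ideal_gen_def by blast

lemma ideal_gen_self: "is_ideal L I \<Longrightarrow> ideal_gen L I = I"
  using ideal_gen_sub ideal_gen_least by blast

lemma ideal_gen_ideal:
  assumes "finite L" "S \<subseteq> conv_series L"
  shows "is_ideal L (ideal_gen L S)"
proof -
  let ?F = "{I. is_ideal L I \<and> S \<subseteq> I}"
  have ne: "conv_series L \<in> ?F" using assms conv_ideal by blast
  show ?thesis unfolding ideal_gen_def unfolding is_ideal_def[of L "\<Inter> ?F"]
  proof (intro conjI ballI)
    show "\<Inter> ?F \<subseteq> conv_series L" using ne by blast
    show "szero \<in> \<Inter> ?F" unfolding is_ideal_def by blast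
    show "sadd f g \<in> \<Inter> ?F" if "f \<in> \<Inter> ?F" "g \<in> \<Inter> ?F" for f g
      using that unfolding is_ideal_def by blast
    show "smult h f \<in> \<Inter> ?F" if "h \<in> conv_series L" "f \<in> \<Inter> ?F" for h f
      using that unfolding is_ideal_def by blast
  qed
qed

lemma mdeg_sub:
  assumes "L \<subseteq> N" "finite N" "supp_in L \<alpha>"
  shows "mdeg N \<alpha> = mdeg L \<alpha>"
  unfolding mdeg_def
  by (rule sum.mono_neutral_right) (use assms in \<open>auto simp: supp_in_def\<close>)

lemma conv_sub:
  assumes "L \<subseteq> N" "finite N" "h \<in> conv_series L"
  shows "h \<in> conv_series N"
proof -
  obtain r where r: "r > 0" "(\<lambda>\<alpha>. norm (h \<alpha>) * r ^ mdeg L \<alpha>) summable_on {\<alpha>. supp_in L \<alpha>}"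
    using assms(3) unfolding conv_series_def by blast
  have z: "\<And>\<alpha>. \<not> supp_in L \<alpha> \<Longrightarrow> h \<alpha> = 0" using assms(3) conv_zero_outside by blast
  have "(\<lambda>\<alpha>. norm (h \<alpha>) * r ^ mdeg N \<alpha>) summable_on {\<alpha>. supp_in N \<alpha>}"
    apply (subst summable_on_cong_neutral[where g="\<lambda>\<alpha>. norm (h \<alpha>) * r ^ mdeg L \<alpha>" and T="{\<alpha>. supp_in L \<alpha>}"])
    prefer 4 apply (rule r(2))
    using z mdeg_sub[OF assms(1,2)] assms(1) by (auto simp: supp_in_def)
  moreover have "\<forall>\<alpha>. h \<alpha> \<noteq> 0 \<longrightarrow> supp_in N \<alpha>" using z assms(1) by (meson subsetD supp_in_def)
  ultimately show ?thesis unfolding conv_series_def using r(1) by blast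
qed

lemma trunc_conv:
  assumes "L \<subseteq> N" "finite N" "F \<in> conv_series N"
  shows "trunc L F \<in> conv_series L"
proof -
  obtain r where r: "r > 0" "(\<lambda>\<alpha>. norm (F \<alpha>) * r ^ mdeg N \<alpha>) summable_on {\<alpha>. supp_in N \<alpha>}"
    using assms(3) unfolding conv_series_def by blast
  have sub: "{\<alpha>. supp_in L \<alpha>} \<subseteq> {\<alpha>. supp_in N \<alpha>}" using assms(1) unfolding supp_in_def by auto
  have "(\<lambda>\<alpha>. norm (F \<alpha>) * r ^ mdeg N \<alpha>) summable_on {\<alpha>. supp_in L \<alpha>}"
    by (rule summable_on_subset_banach[OF r(2) sub])
  then have "(\<lambda>\<alpha>. norm (trunc L F \<alpha>) * r ^ mdeg L \<alpha>) summable_on {\<alpha>. supp_in L \<alpha>}"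
    apply (subst summable_on_cong_neutral[where g="\<lambda>\<alpha>. norm (F \<alpha>) * r ^ mdeg N \<alpha>" and T="{\<alpha>. supp_in L \<alpha>}"])
    using mdeg_sub[OF assms(1,2)] by (auto simp: trunc_def)
  moreover have "\<forall>\<alpha>. trunc L F \<alpha> \<noteq> 0 \<longrightarrow> supp_in L \<alpha>" by (simp add: trunc_def)
  ultimately show ?thesis unfolding conv_series_def using r(1) by blast
qed

lemma trunc_smult: "trunc L (smult h F) = smult (trunc L h) (trunc L F)"
proof
  fix \<alpha>
  show "trunc L (smult h F) \<alpha> = smult (trunc L h) (trunc L F) \<alpha>"
  proof (cases "supp_in L \<alpha>")
    case True
    then show ?thesis unfolding trunc_def smult_def using supp_le[OF True]
      by (auto intro!: sum.cong)
  next
    case False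
    have "trunc L h \<beta> * trunc L F (\<lambda>i. \<alpha> i - \<beta> i) = 0" if "\<forall>i. \<beta> i \<le> \<alpha> i" for \<beta>
    proof (rule ccontr)
      assume "trunc L h \<beta> * trunc L F (\<lambda>i. \<alpha> i - \<beta> i) \<noteq> 0"
      then have "supp_in L \<beta>" "supp_in L (\<lambda>i. \<alpha> i - \<beta> i)"
        by (auto simp: trunc_def split: if_splits)
      then have "supp_in L \<alpha>" using that unfolding supp_in_def
        by (metis add_diff_inverse_nat add_is_0 not_le)
      then show False using False by simp
    qed
    then show ?thesis using False unfolding smult_def trunc_def by (simp add: sum.neutral)
  qed
qed

lemma trunc_sadd: "trunc L (sadd f g) = sadd (trunc L f) (trunc L g)"
  by (auto simp: trunc_def sadd_def)

lemma trunc_szero: "trunc L szero = szero"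
  by (auto simp: trunc_def szero_def)

lemma trunc_id: "h \<in> conv_series L \<Longrightarrow> trunc L h = h"
  using conv_zero_outside by (fastforce simp: trunc_def)

lemma trunc_smonom: "trunc L (smonom \<alpha>) = (if supp_in L \<alpha> then smonom \<alpha> else szero)"
  by (auto simp: trunc_def smonom_def szero_def)


lemma ngreater_asym: "neglex_greater a b \<Longrightarrow> neglex_greater b a \<Longrightarrow> False"
  unfolding neglex_greater_def
  by (metis linorder_neqE_nat not_less_iff_gr_or_eq)

lemma lex_min_aux:
  fixes k :: nat and S :: "mon set"
  assumes "S \<noteq> {}"
  shows "\<exists>\<alpha>\<in>S. \<forall>\<beta>\<in>S. (\<forall>i<k. \<alpha> i = \<beta> i) \<or> (\<exists>i<k. (\<forall>l<i. \<alpha> l = \<beta> l) \<and> \<alpha> i < \<beta> i)"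
proof (induction k)
  case 0 then show ?case using assms by auto
next
  case (Suc k)
  then obtain \<alpha> where a: "\<alpha> \<in> S" "\<forall>\<beta>\<in>S. (\<forall>i<k. \<alpha> i = \<beta> i) \<or> (\<exists>i<k. (\<forall>l<i. \<alpha> l = \<beta> l) \<and> \<alpha> i < \<beta> i)"
    by blast
  define S' where "S' = {\<beta>\<in>S. \<forall>i<k. \<beta> i = \<alpha> i}"
  have "\<alpha> \<in> S'" using a by (auto simp: S'_def)
  then obtain \<gamma> where g: "\<gamma> \<in> S'" "\<And>\<beta>. \<beta> \<in> S' \<Longrightarrow> \<gamma> k \<le> \<beta> k"
    using ex_has_least_nat[of "\<lambda>\<beta>. \<beta> \<in> S'" \<alpha> "\<lambda>\<beta>. \<beta> k"] by blast
  have gS: "\<gamma> \<in> S" and ga: "\<forall>i<k. \<gamma> i = \<alpha> i" using g(1) by (auto simp: S'_def)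
  show ?case
  proof (intro bexI[OF _ gS] ballI)
    fix \<beta> assume b: "\<beta> \<in> S"
    show "(\<forall>i<Suc k. \<gamma> i = \<beta> i) \<or> (\<exists>i<Suc k. (\<forall>l<i. \<gamma> l = \<beta> l) \<and> \<gamma> i < \<beta> i)"
    proof (cases "\<forall>i<k. \<alpha> i = \<beta> i")
      case True
      then have "\<beta> \<in> S'" using b by (auto simp: S'_def)
      then have le: "\<gamma> k \<le> \<beta> k" using g(2) by blast
      have eq: "\<forall>i<k. \<gamma> i = \<beta> i" using True ga by auto
      show ?thesis
      proof (cases "\<gamma> k = \<beta> k")
        case True then show ?thesis using eq less_Suc_eq by auto
      next
        case False then show ?thesis using eq le by (intro disjI2 exI[of _ k]) auto
      qed
    next
      case False
      then obtain i where "i<k" "\<forall>l<i. \<alpha> l = \<beta> l" "\<alpha> i < \<beta> i" using a(2) b by blast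
      then show ?thesis using ga by (intro disjI2 exI[of _ i]) auto
    qed
  qed
qed

lemma init_exp_eq:
  assumes "f \<alpha> \<noteq> 0" "\<forall>\<beta>. f \<beta> \<noteq> 0 \<longrightarrow> \<beta> = \<alpha> \<or> neglex_greater \<alpha> \<beta>"
  shows "init_exp f = \<alpha>"
  unfolding init_exp_def
  apply (rule the_equality)
  using assms apply blast
  using assms ngreater_asym by metis

lemma init_exp_prop:
  assumes N: "finite N" and s: "\<forall>\<alpha>. f \<alpha> \<noteq> 0 \<longrightarrow> supp_in N \<alpha>" and nz: "f \<noteq> szero"
  shows "f (init_exp f) \<noteq> 0 \<and> (\<forall>\<beta>. f \<beta> \<noteq> 0 \<longrightarrow> \<beta> = init_exp f \<or> neglex_greater (init_exp f) \<beta>)"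
proof -
  obtain m where m: "\<forall>i\<in>N. i < m" using N finite_nat_set_iff_bounded by blast
  let ?S = "{\<alpha>. f \<alpha> \<noteq> 0}"
  have ne: "?S \<noteq> {}" using nz by (auto simp: szero_def)
  obtain \<alpha> where a: "\<alpha> \<in> ?S" "\<forall>\<beta>\<in>?S. (\<forall>i<m. \<alpha> i = \<beta> i) \<or> (\<exists>i<m. (\<forall>l<i. \<alpha> l = \<beta> l) \<and> \<alpha> i < \<beta> i)"
    using lex_min_aux[OF ne] by blast
  have pr: "\<forall>\<beta>. f \<beta> \<noteq> 0 \<longrightarrow> \<beta> = \<alpha> \<or> neglex_greater \<alpha> \<beta>"
  proof (intro allI impI)
    fix \<beta> assume fb: "f \<beta> \<noteq> 0"
    show "\<beta> = \<alpha> \<or> neglex_greater \<alpha> \<beta>"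
    proof (cases "\<forall>i<m. \<alpha> i = \<beta> i")
      case True
      have "\<beta> = \<alpha>"
      proof
        fix i show "\<beta> i = \<alpha> i"
        proof (cases "i < m")
          case False
          then have iN: "i \<notin> N" using m by auto
          have fa: "f \<alpha> \<noteq> 0" using a(1) by simp
          have "\<beta> i = 0" using s fb iN unfolding supp_in_def by blast
          moreover have "\<alpha> i = 0" using s fa iN unfolding supp_in_def by blast
          ultimately show ?thesis by simp
        qed (use True in auto)
      qed
      then show ?thesis by simp
    next
      case False then show ?thesis using a(2) fb unfolding neglex_greater_def by blast
    qed
  qed
  have "init_exp f = \<alpha>" using init_exp_eq[OF _ pr] a(1) by simp
  then show ?thesis using pr a(1) by simp
qed



lemma init_trunc:
  fixes n j :: nat
  assumes j: "1 \<le> j" and f: "f \<in> conv_series {1..n}" and nz: "trunc {j..n} f \<noteq> szero"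
  shows "init_exp f = init_exp (trunc {j..n} f) \<and> supp_in {j..n} (init_exp f) \<and> f (init_exp f) \<noteq> 0"
proof -
  let ?L = "{j..n}" and ?g = "trunc {j..n} f"
  have "?g \<in> conv_series ?L" by (rule trunc_conv[OF _ _ f]) (use j in auto)
  then have "\<forall>\<alpha>. ?g \<alpha> \<noteq> 0 \<longrightarrow> supp_in ?L \<alpha>" using conv_zero_outside by blast
  from init_exp_prop[OF finite_atLeastAtMost this nz] obtain \<beta> where b: "\<beta> = init_exp ?g" "?g \<beta> \<noteq> 0"
    "\<forall>\<gamma>. ?g \<gamma> \<noteq> 0 \<longrightarrow> \<gamma> = \<beta> \<or> neglex_greater \<beta> \<gamma>" by blast
  have sb: "supp_in ?L \<beta>" using b(2) unfolding trunc_def by meson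
  have fb: "f \<beta> \<noteq> 0" using b(2) sb unfolding trunc_def by simp
  have pr: "\<forall>\<gamma>. f \<gamma> \<noteq> 0 \<longrightarrow> \<gamma> = \<beta> \<or> neglex_greater \<beta> \<gamma>"
  proof (intro allI impI)
    fix \<gamma> assume fg: "f \<gamma> \<noteq> 0"
    show "\<gamma> = \<beta> \<or> neglex_greater \<beta> \<gamma>"
    proof (cases "supp_in ?L \<gamma>")
      case True then have "?g \<gamma> \<noteq> 0" using fg by (simp add: trunc_def)
      then show ?thesis using b(3) by blast
    next
      case False
      then obtain i where i: "i \<notin> ?L" "\<gamma> i \<noteq> 0" unfolding supp_in_def by blast
      have sN: "supp_in {1..n} \<gamma>" using conv_zero_outside[OF f] fg by blast
      have "i \<in> {1..n}"
      proof (rule ccontr)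
        assume "i \<notin> {1..n}"
        then have "\<gamma> i = 0" using sN unfolding supp_in_def by simp
        then show False using i(2) by simp
      qed
      then have ij: "i < j" using i(1) by auto
      define k where "k = (LEAST k. \<gamma> k \<noteq> 0)"
      have k: "\<gamma> k \<noteq> 0" "k \<le> i" unfolding k_def
        by (rule LeastI[of _ i], rule i(2)) (rule Least_le, rule i(2))
      have "\<forall>l<k. \<gamma> l = 0" unfolding k_def using not_less_Least by (metis (mono_tags))
      moreover have "\<forall>l<j. \<beta> l = 0" using sb unfolding supp_in_def by auto
      ultimately have "(\<forall>l<k. \<beta> l = \<gamma> l) \<and> \<beta> k < \<gamma> k" using k ij by auto
      then show ?thesis unfolding neglex_greater_def by blast
    qed
  qed
  have "init_exp f = \<beta>" by (rule init_exp_eq[OF fb pr])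
  then show ?thesis using b(1) sb fb by simp
qed


theorem lemma2p3:
  fixes n j :: nat and J :: "series set"
  assumes "is_ideal {1..n} J"
    and "finite_colength n J"
    and "1 \<le> j" and "j \<le> n"
  shows "init_ideal {j..n} (restr_ideal {j..n} J) = restr_ideal {j..n} (init_ideal {1..n} J)"
proof -
  let ?N = "{1..n}" and ?L = "{j..n}"
  have LN: "?L \<subseteq> ?N" using assms(3) by auto
  have finN: "finite ?N" and finL: "finite ?L" by auto
  have J: "is_ideal ?N J" by fact
  have JN: "J \<subseteq> conv_series ?N" using J unfolding is_ideal_def by blast
  have TJ: "is_ideal ?L (trunc ?L ` J)"
    unfolding is_ideal_def[of ?L "trunc ?L ` J"]
  proof (intro conjI ballI)
    show "trunc ?L ` J \<subseteq> conv_series ?L" using trunc_conv[OF LN finN] JN by blast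
    show "szero \<in> trunc ?L ` J"
      using J trunc_szero unfolding is_ideal_def by (metis image_eqI)
    fix g assume "g \<in> trunc ?L ` J"
    then obtain G where G: "G \<in> J" "g = trunc ?L G" by blast
    {
      fix f assume "f \<in> trunc ?L ` J"
      then obtain F where F: "F \<in> J" "f = trunc ?L F" by blast
      have "sadd f g = trunc ?L (sadd F G)" using F G trunc_sadd by metis
      moreover have "sadd F G \<in> J" using J F G unfolding is_ideal_def by blast
      ultimately show "sadd f g \<in> trunc ?L ` J" by blast
    }
    {
      fix h assume h: "h \<in> conv_series ?L"
      have "smult h g = trunc ?L (smult h G)" using G trunc_smult trunc_id[OF h] by metis
      moreover have "smult h G \<in> J" using J G conv_sub[OF LN finN h] unfolding is_ideal_def by blast
      ultimately show "smult h g \<in> trunc ?L ` J" by blast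
    }
  qed
  have R: "restr_ideal ?L J = trunc ?L ` J"
    unfolding restr_ideal_def by (rule ideal_gen_self[OF TJ])
  define S1 where "S1 = {smonom (init_exp f) | f. f \<in> trunc ?L ` J \<and> f \<noteq> szero}"
  define S0 where "S0 = {smonom (init_exp f) | f. f \<in> J \<and> f \<noteq> szero}"
  define I0 where "I0 = ideal_gen ?N S0"
  have LHS: "init_ideal ?L (restr_ideal ?L J) = ideal_gen ?L S1"
    unfolding init_ideal_def R S1_def by simp
  have RHS: "restr_ideal ?L (init_ideal ?N J) = ideal_gen ?L (trunc ?L ` I0)"
    unfolding restr_ideal_def init_ideal_def I0_def S0_def by simp
  have a: "S1 \<subseteq> ideal_gen ?L (trunc ?L ` I0)"
  proof
    fix x assume "x \<in> S1"
    then obtain F where F: "F \<in> J" "trunc ?L F \<noteq> szero" "x = smonom (init_exp (trunc ?L F))"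
      unfolding S1_def by blast
    have FN: "F \<in> conv_series ?N" using F(1) JN by blast
    have it: "init_exp F = init_exp (trunc ?L F)" "supp_in ?L (init_exp F)" "F (init_exp F) \<noteq> 0"
      using init_trunc[OF assms(3) FN F(2)] by auto
    have "F \<noteq> szero" using it(3) by (auto simp: szero_def)
    then have "smonom (init_exp F) \<in> S0" unfolding S0_def using F(1) by blast
    then have m: "smonom (init_exp F) \<in> I0" unfolding I0_def by (rule subsetD[OF ideal_gen_sub])
    have "trunc ?L (smonom (init_exp F)) = x" using it F(3) trunc_smonom by simp
    then have "x \<in> trunc ?L ` I0" using m by (rule image_eqI[OF sym])
    then show "x \<in> ideal_gen ?L (trunc ?L ` I0)" by (rule subsetD[OF ideal_gen_sub])
  qed
  have S1L: "S1 \<subseteq> conv_series ?L"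
  proof
    fix x assume "x \<in> S1"
    then obtain F where F: "F \<in> J" "trunc ?L F \<noteq> szero" "x = smonom (init_exp (trunc ?L F))"
      unfolding S1_def by blast
    have FN: "F \<in> conv_series ?N" using F(1) JN by blast
    show "x \<in> conv_series ?L" using init_trunc[OF assms(3) FN F(2)] F(3) smonom_conv by metis
  qed
  define M where "M = ideal_gen ?L S1"
  have M: "is_ideal ?L M" unfolding M_def by (rule ideal_gen_ideal[OF finL S1L])
  define K where "K = {F \<in> conv_series ?N. trunc ?L F \<in> M}"
  have K: "is_ideal ?N K"
    unfolding is_ideal_def[of ?N K]
  proof (intro conjI ballI)
    show "K \<subseteq> conv_series ?N" unfolding K_def by blast
    show "szero \<in> K" unfolding K_def using szero_conv trunc_szero M unfolding is_ideal_def by simp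
    fix g assume g: "g \<in> K"
    {
      fix f assume f: "f \<in> K"
      show "sadd f g \<in> K" using f g sadd_conv trunc_sadd M unfolding K_def is_ideal_def by simp
    }
    {
      fix h assume h: "h \<in> conv_series ?N"
      have "trunc ?L h \<in> conv_series ?L" by (rule trunc_conv[OF LN finN h])
      then have "smult (trunc ?L h) (trunc ?L g) \<in> M" using g M unfolding K_def is_ideal_def by blast
      then show "smult h g \<in> K" using smult_conv[OF finN h] g trunc_smult unfolding K_def by simp
    }
  qed
  have S0K: "S0 \<subseteq> K"
  proof
    fix x assume "x \<in> S0"
    then obtain f where f: "f \<in> J" "f \<noteq> szero" "x = smonom (init_exp f)" unfolding S0_def by blast
    have fN: "f \<in> conv_series ?N" using f(1) JN by blast
    have "\<forall>\<alpha>. f \<alpha> \<noteq> 0 \<longrightarrow> supp_in ?N \<alpha>" using conv_zero_outside[OF fN] by blast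
    from init_exp_prop[OF finN this f(2)] have fi: "f (init_exp f) \<noteq> 0" by (rule conjunct1)
    then have sN: "supp_in ?N (init_exp f)" using conv_zero_outside[OF fN] by blast
    have "trunc ?L x \<in> M"
    proof (cases "supp_in ?L (init_exp f)")
      case True
      then have "trunc ?L f (init_exp f) \<noteq> 0" using fi by (simp add: trunc_def)
      then have tz: "trunc ?L f \<noteq> szero" by (auto simp: szero_def)
      have "init_exp f = init_exp (trunc ?L f)" using init_trunc[OF assms(3) fN tz] by blast
      then have "x = smonom (init_exp (trunc ?L f))" using f(3) by simp
      moreover have "trunc ?L f \<in> trunc ?L ` J" using f(1) by (rule imageI)
      ultimately have "x \<in> S1" unfolding S1_def using tz by blast
      then have xM: "x \<in> M" unfolding M_def by (rule subsetD[OF ideal_gen_sub])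
      have "trunc ?L x = x" using True f(3) trunc_smonom by simp
      then show ?thesis using xM by simp
    next
      case False
      then have "trunc ?L x = szero" using f(3) trunc_smonom by simp
      then show ?thesis using M unfolding is_ideal_def by simp
    qed
    then show "x \<in> K" unfolding K_def using smonom_conv[OF sN] f(3) by simp
  qed
  have "I0 \<subseteq> K" unfolding I0_def by (rule ideal_gen_least[OF K S0K])
  then have b: "trunc ?L ` I0 \<subseteq> ideal_gen ?L S1" unfolding K_def M_def by blast
  show ?thesis unfolding LHS RHS
    using ideal_gen_mono'[OF a] ideal_gen_mono'[OF b] by blast
qed

end
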